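(* Let $s\ge2$ be such that $s-1$, $s$ and $s+1$ are all knots of $p_0$. Then with probability one there exists $n_0$ such that for all $n\ge n_0$, $\hat p_n(s)=p_n(s)$. In particular $\sqrt n(\hat p_n(s)-p_0(s))$ converges in distribution to $\mathcal N(0,p_0(s)(1-p_0(s)))$.
   Context: Let $\mathbb N=\{0,1,\dots\}$. For a real sequence $p$ and $k\ge1$ let $\Delta p(k)=p(k+1)-2p(k)+p(k-1)$; $p$ is convex if $\Delta p(k)\ge0$ for all $k\ge1$; $\mathcal C$ is the set of convex sequences with $\sum_kp(k)^2<\infty$. A knot of $p$ is an integer $k\ge1$ with $\Delta p(k)>0$. Let $p_0$ be a convex probability mass function on $\mathbb N$ whose support is either $\mathbb N$ or $\{0,\dots,S\}$ for some integer $S\ge1$. Let $X_1,X_2,\dots$ be i.i.d. with pmf $p_0$, $p_n(j)=\frac1n\sum_{i\le n}\mathbb 1\{X_i=j\}$, and let $\hat p_n$ be the unique minimizer over $\mathcal C$ of $\frac12\sum_j(p_n(j)-p(j))^2$. *)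

theory Defs
  imports "HOL-Probability.Probability"
begin

text \<open>Second difference of a real sequence, for k >= 1.\<close>
definition sdiff :: "(nat \<Rightarrow> real) \<Rightarrow> nat \<Rightarrow> real" where
  "sdiff p k = p (k + 1) - 2 * p k + p (k - 1)"

definition convex_seq :: "(nat \<Rightarrow> real) \<Rightarrow> bool" where
  "convex_seq p \<longleftrightarrow> (\<forall>k\<ge>1. sdiff p k \<ge> 0)"

definition convexL2 :: "(nat \<Rightarrow> real) set" where
  "convexL2 = {p. convex_seq p \<and> summable (\<lambda>k. (p k)\<^sup>2)}"

definition knot :: "(nat \<Rightarrow> real) \<Rightarrow> nat \<Rightarrow> bool" where
  "knot p k \<longleftrightarrow> k \<ge> 1 \<and> sdiff p k > 0"

definition ls_crit :: "(nat \<Rightarrow> real) \<Rightarrow> (nat \<Rightarrow> real) \<Rightarrow> real" where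
  "ls_crit q p = (1/2) * (\<Sum>j. (q j - p j)\<^sup>2)"

definition ls_convex :: "(nat \<Rightarrow> real) \<Rightarrow> (nat \<Rightarrow> real)" where
  "ls_convex q = (THE p. p \<in> convexL2 \<and> (\<forall>p'\<in>convexL2. ls_crit q p \<le> ls_crit q p'))"

definition emp_pmf :: "(nat \<Rightarrow> 'a \<Rightarrow> nat) \<Rightarrow> nat \<Rightarrow> 'a \<Rightarrow> nat \<Rightarrow> real" where
  "emp_pmf X n \<omega> j = real (card {i. i < n \<and> X i \<omega> = j}) / real n"

end

theory Submission
  imports Defs
begin


lemma sdiff_Suc: "sdiff p (Suc k) = p (k+2) - 2 * p (Suc k) + p k"
  by (simp add: sdiff_def)

lemma convex_diff_mono:
  assumes "convex_seq p"
  shows "p (Suc k) - p k \<le> p (Suc (k+i)) - p (k+i)"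
proof (induction i)
  case 0 then show ?case by simp
next
  case (Suc i)
  have "sdiff p (Suc (k+i)) \<ge> 0" using assms unfolding convex_seq_def by auto
  then have "p (Suc (Suc (k+i))) - 2 * p (Suc (k+i)) + p (k+i) \<ge> 0"
    unfolding sdiff_def by (simp add: numeral_2_eq_2)
  then show ?case using Suc.IH by simp
qed

lemma convexL2_decr:
  assumes "p \<in> convexL2"
  shows "p (Suc k) \<le> p k"
proof (rule ccontr)
  assume nt: "\<not> p (Suc k) \<le> p k"
  define d where "d = p (Suc k) - p k"
  have d: "d > 0" using nt by (simp add: d_def)
  have cv: "convex_seq p" and sm: "summable (\<lambda>k. (p k)\<^sup>2)" using assms by (auto simp: convexL2_def)
  have grow: "p (k + i) \<ge> p k + real i * d" for i
  proof (induction i)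
    case 0 then show ?case by simp
  next
    case (Suc i)
    have "d \<le> p (Suc (k+i)) - p (k+i)" using convex_diff_mono[OF cv, of k i] by (simp add: d_def)
    then show ?case using Suc by (simp add: algebra_simps)
  qed
  have "(\<lambda>k. (p k)\<^sup>2) \<longlonglongrightarrow> 0" using summable_LIMSEQ_zero[OF sm] .
  then have "(\<lambda>k. sqrt ((p k)\<^sup>2)) \<longlonglongrightarrow> sqrt 0" by (rule tendsto_real_sqrt)
  then have "(\<lambda>k. \<bar>p k\<bar>) \<longlonglongrightarrow> 0" by simp
  then have "(\<lambda>k. p k) \<longlonglongrightarrow> 0" by (simp add: tendsto_rabs_zero_iff)
  then have "(\<lambda>i. p (i + k)) \<longlonglongrightarrow> 0" by (rule LIMSEQ_ignore_initial_segment)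
  then have "Bseq (\<lambda>i. p (i + k))" by (rule convergent_imp_Bseq[OF convergentI])
  then obtain B where B: "\<And>i. \<bar>p (i + k)\<bar> \<le> B" by (auto simp: Bseq_def)
  obtain i :: nat where "real i > (B - p k) / d" using reals_Archimedean2 by blast
  then have "real i * d > B - p k" using d by (simp add: field_simps)
  then have "p (k+i) > B" using grow[of i] by linarith
  with B[of i] show False by (simp add: add.commute)
qed

lemma convexL2_lim: "p \<in> convexL2 \<Longrightarrow> p \<longlonglongrightarrow> 0"
proof -
  assume "p \<in> convexL2"
  then have sm: "summable (\<lambda>k. (p k)\<^sup>2)" by (auto simp: convexL2_def)
  have "(\<lambda>k. (p k)\<^sup>2) \<longlonglongrightarrow> 0" using summable_LIMSEQ_zero[OF sm] .
  then have "(\<lambda>k. sqrt ((p k)\<^sup>2)) \<longlonglongrightarrow> sqrt 0" by (rule tendsto_real_sqrt)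
  then have "(\<lambda>k. \<bar>p k\<bar>) \<longlonglongrightarrow> 0" by simp
  then show "p \<longlonglongrightarrow> 0" by (simp add: tendsto_rabs_zero_iff)
qed

lemma convexL2_nonneg:
  assumes "p \<in> convexL2" shows "p k \<ge> 0"
proof -
  have "decseq p" using convexL2_decr[OF assms] by (simp add: decseq_Suc_iff)
  then show ?thesis using decseq_ge[OF _ convexL2_lim[OF assms]] by blast
qed

lemma convexL2_le0:
  assumes "p \<in> convexL2" shows "p k \<le> p 0"
proof -
  have "decseq p" using convexL2_decr[OF assms] by (simp add: decseq_Suc_iff)
  then show ?thesis by (simp add: decseq_def)
qed


lemma diag_bounded:
  fixes f :: "nat \<Rightarrow> nat \<Rightarrow> real"
  assumes "\<And>k i. f k i \<in> {0..B}"
  shows "\<exists>r g. strict_mono r \<and> (\<forall>i. (\<lambda>k. f (r k) i) \<longlonglongrightarrow> g i)"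
proof -
  define K :: "(nat \<Rightarrow> real) set" where "K = PiE UNIV (\<lambda>i. {0..B})"
  have "compactin (product_topology (\<lambda>i. euclidean) UNIV) K"
    unfolding K_def by (subst compactin_PiE) auto
  then have "compact K" by (simp add: euclidean_product_topology compactin_euclidean_iff)
  then have "seq_compact K" by (rule compact_imp_seq_compact)
  moreover have "\<And>k. f k \<in> K" using assms by (auto simp: K_def)
  ultimately obtain g r where "strict_mono r" "(f \<circ> r) \<longlonglongrightarrow> g"
    unfolding seq_compact_def by meson
  moreover have "(\<lambda>k. f (r k) i) \<longlonglongrightarrow> g i" for i
  proof -
    have "continuous_on UNIV (\<lambda>x::nat\<Rightarrow>real. x i)" by simp
    then have "isCont (\<lambda>x::nat\<Rightarrow>real. x i) g" using continuous_on_eq_continuous_at open_UNIV by blast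
    from isCont_tendsto_compose[OF this \<open>(f \<circ> r) \<longlonglongrightarrow> g\<close>] show ?thesis by (simp add: o_def)
  qed
  ultimately show ?thesis by blast
qed


lemma sq_diff_le: "((a::real) - b)\<^sup>2 \<le> 2 * a\<^sup>2 + 2 * b\<^sup>2"
proof -
  have "0 \<le> (a+b)\<^sup>2" by simp
  then show ?thesis unfolding power2_eq_square by (simp add: algebra_simps)
qed

lemma summable_sq_diff:
  fixes a b :: "nat \<Rightarrow> real"
  assumes "summable (\<lambda>j. (a j)\<^sup>2)" "summable (\<lambda>j. (b j)\<^sup>2)"
  shows "summable (\<lambda>j. (a j - b j)\<^sup>2)"
proof (rule summable_comparison_test[OF _ summable_add[OF summable_mult[OF assms(1), of 2] summable_mult[OF assms(2), of 2]]])
  show "\<exists>N. \<forall>n\<ge>N. norm ((a n - b n)\<^sup>2) \<le> 2 * (a n)\<^sup>2 + 2 * (b n)\<^sup>2"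
    using sq_diff_le by auto
qed

lemma convex_seq_mid:
  assumes "convex_seq p1" "convex_seq p2"
  shows "convex_seq (\<lambda>j. (p1 j + p2 j)/2)"
  unfolding convex_seq_def sdiff_def
proof (intro allI impI)
  fix k :: nat assume k: "k \<ge> 1"
  have "0 \<le> p1 (k + 1) - 2 * p1 k + p1 (k - 1)" "0 \<le> p2 (k + 1) - 2 * p2 k + p2 (k - 1)"
    using assms k unfolding convex_seq_def sdiff_def by auto
  then show "0 \<le> (p1 (k + 1) + p2 (k + 1)) / 2 - 2 * ((p1 k + p2 k) / 2) + (p1 (k - 1) + p2 (k - 1)) / 2"
    by (simp add: field_simps)
qed

lemma mid_identity: "((q::real) - (a+b)/2)\<^sup>2 = ((q-a)\<^sup>2 + (q-b)\<^sup>2)/2 - (a-b)\<^sup>2/4"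
  by (simp add: power2_eq_square field_simps)


lemma zero_convexL2: "(\<lambda>_. 0) \<in> convexL2"
  by (simp add: convexL2_def convex_seq_def sdiff_def)

lemma convexL2_sq: "p \<in> convexL2 \<Longrightarrow> summable (\<lambda>j. (p j)\<^sup>2)"
  by (simp add: convexL2_def)

lemma sq_le_via: "(p::real)\<^sup>2 \<le> 2 * q\<^sup>2 + 2 * (q - p)\<^sup>2"
  using sq_diff_le[of q "q - p"] by simp

lemma ls_exists:
  assumes sq: "summable (\<lambda>j. (q j)\<^sup>2)"
  shows "\<exists>p\<in>convexL2. \<forall>p'\<in>convexL2. ls_crit q p \<le> ls_crit q p'"
proof -
  define F where "F p = (\<Sum>j. (q j - p j)\<^sup>2)" for p
  have Fs: "summable (\<lambda>j. (q j - p j)\<^sup>2)" if "p \<in> convexL2" for p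
    using summable_sq_diff[OF sq convexL2_sq[OF that]] .
  have F0: "F p \<ge> 0" if "p \<in> convexL2" for p
    unfolding F_def by (rule suminf_nonneg[OF Fs[OF that]]) simp
  define m where "m = (INF p\<in>convexL2. F p)"
  have bdd: "bdd_below (F ` convexL2)" using F0 by (auto intro: bdd_belowI[of _ 0])
  have mle: "m \<le> F p" if "p \<in> convexL2" for p
    unfolding m_def using bdd that by (rule cINF_lower)
  have "\<exists>p\<in>convexL2. F p < m + 1 / real (Suc k)" for k
  proof -
    have "m < m + 1 / real (Suc k)" by simp
    then show ?thesis unfolding m_def using cINF_less_iff[OF _ bdd] zero_convexL2 by blast
  qed
  then obtain P where P: "\<And>k. P k \<in> convexL2" "\<And>k. F (P k) < m + 1 / real (Suc k)"
    by metis
  define Q where "Q = (\<Sum>j. (q j)\<^sup>2)"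
  define B where "B = sqrt (2 * Q + 2 * (m + 1))"
  have bnd: "P k j \<in> {0..B}" for k j
  proof -
    have sP: "summable (\<lambda>j. (P k j)\<^sup>2)" using convexL2_sq[OF P(1)] .
    have "(P k j)\<^sup>2 \<le> (P k 0)\<^sup>2"
      using convexL2_nonneg[OF P(1)] convexL2_le0[OF P(1)] by (simp add: power_mono)
    also have "(P k 0)\<^sup>2 = (\<Sum>i<Suc 0. (P k i)\<^sup>2)" by simp
    also have "\<dots> \<le> (\<Sum>i. (P k i)\<^sup>2)" by (rule sum_le_suminf[OF sP]) auto
    also have "\<dots> \<le> (\<Sum>i. 2 * (q i)\<^sup>2 + 2 * (q i - P k i)\<^sup>2)"
      by (rule suminf_le[OF _ sP]) (auto intro!: summable_add summable_mult sq Fs P sq_le_via)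
    also have "\<dots> = 2 * Q + 2 * F (P k)"
      by (subst suminf_add[symmetric]) (auto intro!: summable_mult sq Fs P simp: Q_def F_def suminf_mult[OF sq] suminf_mult[OF Fs[OF P(1)]])
    also have "\<dots> \<le> 2 * Q + 2 * (m + 1)"
    proof -
      have "1 / real (Suc k) \<le> 1" by simp
      then have "F (P k) \<le> m + 1" using P(2)[of k] by linarith
      then show ?thesis by simp
    qed
    finally have "(P k j)\<^sup>2 \<le> 2 * Q + 2 * (m + 1)" .
    then have "sqrt ((P k j)\<^sup>2) \<le> B" unfolding B_def by (rule real_sqrt_le_mono)
    then show ?thesis using convexL2_nonneg[OF P(1)] by simp
  qed
  obtain r g where r: "strict_mono r" and g: "\<And>j. (\<lambda>k. P (r k) j) \<longlonglongrightarrow> g j"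
    using diag_bounded[of P B, OF bnd] by blast
  have cg: "convex_seq g" unfolding convex_seq_def
  proof (intro allI impI)
    fix k :: nat assume k: "k \<ge> 1"
    have "(\<lambda>i. sdiff (P (r i)) k) \<longlonglongrightarrow> sdiff g k"
      unfolding sdiff_def by (intro tendsto_intros g)
    moreover have "\<forall>i. 0 \<le> sdiff (P (r i)) k"
      using P(1) k by (auto simp: convexL2_def convex_seq_def)
    ultimately show "0 \<le> sdiff g k" by (intro LIMSEQ_le_const) auto
  qed
  have part: "(\<Sum>j<N. (q j - g j)\<^sup>2) \<le> m" for N
  proof -
    have "(\<lambda>i. \<Sum>j<N. (q j - P (r i) j)\<^sup>2) \<longlonglongrightarrow> (\<Sum>j<N. (q j - g j)\<^sup>2)"
      by (intro tendsto_intros g)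
    moreover have "(\<lambda>i. m + 1 / real (Suc i)) \<longlonglongrightarrow> m + 0"
      by (intro tendsto_intros LIMSEQ_inverse_real_of_nat[unfolded inverse_eq_divide])
    moreover have "(\<Sum>j<N. (q j - P (r i) j)\<^sup>2) \<le> m + 1 / real (Suc i)" for i
    proof -
      have "(\<Sum>j<N. (q j - P (r i) j)\<^sup>2) \<le> F (P (r i))"
        unfolding F_def by (rule sum_le_suminf[OF Fs[OF P(1)]]) auto
      also have "\<dots> < m + 1 / real (Suc (r i))" by (rule P(2))
      also have "\<dots> \<le> m + 1 / real (Suc i)"
        using seq_suble[OF r, of i] by (simp add: frac_le)
      finally show ?thesis by simp
    qed
    ultimately show ?thesis by (intro LIMSEQ_le[where X="\<lambda>i. \<Sum>j<N. (q j - P (r i) j)\<^sup>2"]) auto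
  qed
  have sg: "summable (\<lambda>j. (q j - g j)\<^sup>2)"
    by (rule summableI_nonneg_bounded[OF _ part]) simp
  have Fg: "F g \<le> m" unfolding F_def by (rule suminf_le_const[OF sg part])
  have "summable (\<lambda>j. (g j)\<^sup>2)"
    by (rule summable_comparison_test[OF _ summable_add[OF summable_mult[OF sq, of 2] summable_mult[OF sg, of 2]]])
       (auto intro: sq_le_via)
  then have gC: "g \<in> convexL2" using cg by (simp add: convexL2_def)
  show ?thesis
  proof (intro bexI[OF _ gC] ballI)
    fix p' assume "p' \<in> convexL2"
    then have "F g \<le> F p'" using Fg mle by fastforce
    then show "ls_crit q g \<le> ls_crit q p'" by (simp add: ls_crit_def F_def)
  qed
qed


lemma ls_unique:
  assumes sq: "summable (\<lambda>j. (q j)\<^sup>2)"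
    and a: "a \<in> convexL2" "\<forall>p'\<in>convexL2. ls_crit q a \<le> ls_crit q p'"
    and b: "b \<in> convexL2" "\<forall>p'\<in>convexL2. ls_crit q b \<le> ls_crit q p'"
  shows "a = b"
proof -
  define c where "c = (\<lambda>j. (a j + b j) / 2)"
  have sa: "summable (\<lambda>j. (q j - a j)\<^sup>2)" using summable_sq_diff[OF sq convexL2_sq[OF a(1)]] .
  have sb: "summable (\<lambda>j. (q j - b j)\<^sup>2)" using summable_sq_diff[OF sq convexL2_sq[OF b(1)]] .
  have sab: "summable (\<lambda>j. (a j - b j)\<^sup>2)" using summable_sq_diff[OF convexL2_sq[OF a(1)] convexL2_sq[OF b(1)]] .
  have sc2: "summable (\<lambda>j. (c j)\<^sup>2)"
  proof -
    have "summable (\<lambda>j. ((q j - a j)\<^sup>2 + (q j - b j)\<^sup>2)/2 - (a j - b j)\<^sup>2/4)"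
      by (intro summable_diff summable_divide summable_add sa sb sab)
    then have "summable (\<lambda>j. (q j - c j)\<^sup>2)" unfolding c_def by (simp add: mid_identity)
    from summable_sq_diff[OF sq this] show ?thesis by simp
  qed
  have cC: "c \<in> convexL2"
    using convex_seq_mid[of a b] a(1) b(1) sc2 unfolding convexL2_def c_def by auto
  have "(\<Sum>j. (q j - c j)\<^sup>2) = (\<Sum>j. ((q j - a j)\<^sup>2 + (q j - b j)\<^sup>2)/2 - (a j - b j)\<^sup>2/4)"
    unfolding c_def by (simp add: mid_identity)
  also have "\<dots> = ((\<Sum>j. (q j - a j)\<^sup>2) + (\<Sum>j. (q j - b j)\<^sup>2))/2 - (\<Sum>j. (a j - b j)\<^sup>2)/4"
  proof -
    have s1: "(\<lambda>j. ((q j - a j)\<^sup>2 + (q j - b j)\<^sup>2)/2) sums (((\<Sum>j. (q j - a j)\<^sup>2) + (\<Sum>j. (q j - b j)\<^sup>2))/2)"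
      by (intro sums_divide sums_add summable_sums sa sb)
    have s2: "(\<lambda>j. (a j - b j)\<^sup>2/4) sums ((\<Sum>j. (a j - b j)\<^sup>2)/4)"
      by (intro sums_divide summable_sums sab)
    from sums_diff[OF s1 s2] show ?thesis by (rule sums_unique[symmetric])
  qed
  finally have eq: "(\<Sum>j. (q j - c j)\<^sup>2) = ((\<Sum>j. (q j - a j)\<^sup>2) + (\<Sum>j. (q j - b j)\<^sup>2))/2 - (\<Sum>j. (a j - b j)\<^sup>2)/4" .
  have h: "ls_crit q a \<le> ls_crit q b" "ls_crit q b \<le> ls_crit q a" "ls_crit q a \<le> ls_crit q c"
    using a b cC by auto
  have key: "\<And>A B Cc D :: real. 1/2*A \<le> 1/2*B \<Longrightarrow> 1/2*B \<le> 1/2*A \<Longrightarrow> 1/2*A \<le> 1/2*Cc \<Longrightarrow> Cc = (A+B)/2 - D/4 \<Longrightarrow> D \<le> 0"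
    by (simp add: field_simps)
  have "(\<Sum>j. (a j - b j)\<^sup>2) \<le> 0"
    by (rule key[OF h[unfolded ls_crit_def] eq])
  moreover have "(\<Sum>j. (a j - b j)\<^sup>2) \<ge> 0" by (rule suminf_nonneg[OF sab]) simp
  ultimately have "(\<Sum>j. (a j - b j)\<^sup>2) = 0" by linarith
  then have "\<forall>j. (a j - b j)\<^sup>2 = 0" using suminf_eq_zero_iff[OF sab] by simp
  then show "a = b" by auto
qed

lemma ls_convex_prop:
  assumes sq: "summable (\<lambda>j. (q j)\<^sup>2)"
  shows "ls_convex q \<in> convexL2 \<and> (\<forall>p'\<in>convexL2. ls_crit q (ls_convex q) \<le> ls_crit q p')"
proof -
  have "\<exists>!p. p \<in> convexL2 \<and> (\<forall>p'\<in>convexL2. ls_crit q p \<le> ls_crit q p')"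
    using ls_exists[OF sq] ls_unique[OF sq] by blast
  from theI'[OF this] show ?thesis unfolding ls_convex_def .
qed


lemma term_le_suminf:
  fixes f :: "nat \<Rightarrow> real"
  assumes "summable f" "\<And>n. 0 \<le> f n"
  shows "f j \<le> suminf f"
  using sum_le_suminf[OF assms(1), of "{j}"] assms(2) by simp

lemma ls_close:
  assumes sq: "summable (\<lambda>j. (q j)\<^sup>2)" and p0: "p0 \<in> convexL2"
  shows "(ls_convex q j - p0 j)\<^sup>2 \<le> 4 * (\<Sum>i. (q i - p0 i)\<^sup>2)"
proof -
  define h where "h = ls_convex q"
  have hC: "h \<in> convexL2" and hmin: "ls_crit q h \<le> ls_crit q p0"
    using ls_convex_prop[OF sq] p0 unfolding h_def by auto
  have s1: "summable (\<lambda>i. (q i - h i)\<^sup>2)" using summable_sq_diff[OF sq convexL2_sq[OF hC]] .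
  have s0: "summable (\<lambda>i. (q i - p0 i)\<^sup>2)" using summable_sq_diff[OF sq convexL2_sq[OF p0]] .
  have s2: "summable (\<lambda>i. (h i - p0 i)\<^sup>2)" using summable_sq_diff[OF convexL2_sq[OF hC] convexL2_sq[OF p0]] .
  have "(h j - p0 j)\<^sup>2 \<le> (\<Sum>i. (h i - p0 i)\<^sup>2)" by (rule term_le_suminf[OF s2]) simp
  also have "\<dots> \<le> (\<Sum>i. 2 * (q i - h i)\<^sup>2 + 2 * (q i - p0 i)\<^sup>2)"
  proof (rule suminf_le[OF _ s2])
    show "summable (\<lambda>i. 2 * (q i - h i)\<^sup>2 + 2 * (q i - p0 i)\<^sup>2)"
      by (intro summable_add summable_mult s1 s0)
    fix i show "(h i - p0 i)\<^sup>2 \<le> 2 * (q i - h i)\<^sup>2 + 2 * (q i - p0 i)\<^sup>2"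
      using sq_diff_le[of "h i - q i" "p0 i - q i"] by (simp add: power2_commute)
  qed
  also have "\<dots> = 2 * (\<Sum>i. (q i - h i)\<^sup>2) + 2 * (\<Sum>i. (q i - p0 i)\<^sup>2)"
    by (subst suminf_add[symmetric]) (auto intro!: summable_mult s1 s0 simp: suminf_mult[OF s1] suminf_mult[OF s0])
  also have "\<dots> \<le> 4 * (\<Sum>i. (q i - p0 i)\<^sup>2)" using hmin unfolding ls_crit_def by simp
  finally show ?thesis unfolding h_def .
qed

lemma ls_knot_fix:
  assumes sq: "summable (\<lambda>j. (q j)\<^sup>2)" and s: "s \<ge> 2"
    and k1: "sdiff (ls_convex q) (s - 1) > 0" and k2: "sdiff (ls_convex q) s > 0"
    and k3: "sdiff (ls_convex q) (s + 1) > 0"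
  shows "ls_convex q s = q s"
proof (rule ccontr)
  assume ne: "ls_convex q s \<noteq> q s"
  define h where "h = ls_convex q"
  have hC: "h \<in> convexL2" and hmin: "\<And>p'. p' \<in> convexL2 \<Longrightarrow> ls_crit q h \<le> ls_crit q p'"
    using ls_convex_prop[OF sq] unfolding h_def by auto
  define a where "a = q s - h s"
  have a0: "a \<noteq> 0" using ne by (simp add: a_def h_def)
  define \<delta> where "\<delta> = min (sdiff h (s - 1)) (min (sdiff h s) (sdiff h (s + 1)))"
  have \<delta>: "\<delta> > 0" using k1 k2 k3 by (simp add: \<delta>_def h_def)
  define t where "t = min 1 (\<delta> / (2 * \<bar>a\<bar>))"
  have t0: "t > 0" "t \<le> 1" using \<delta> a0 by (auto simp: t_def)
  have ta: "t * \<bar>a\<bar> \<le> \<delta> / 2"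
  proof -
    have "t \<le> \<delta> / (2 * \<bar>a\<bar>)" by (simp add: t_def)
    then have "t * \<bar>a\<bar> \<le> \<delta> / (2 * \<bar>a\<bar>) * \<bar>a\<bar>" by (rule mult_right_mono) simp
    also have "\<dots> = \<delta> / 2" using a0 by simp
    finally show ?thesis .
  qed
  define \<epsilon> where "\<epsilon> = t * a"
  have e_abs: "2 * \<bar>\<epsilon>\<bar> \<le> \<delta>" using ta t0 by (simp add: \<epsilon>_def abs_mult)
  define e :: "nat \<Rightarrow> real" where "e j = (if j = s then \<epsilon> else 0)" for j
  define p where "p j = h j + e j" for j
  have conv: "convex_seq p" unfolding convex_seq_def
  proof (intro allI impI)
    fix k :: nat assume k: "1 \<le> k"
    have hk: "sdiff h k \<ge> 0" using hC k by (auto simp: convexL2_def convex_seq_def)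
    have sd: "sdiff p k = sdiff h k + (e (k+1) - 2 * e k + e (k - 1))"
      by (simp add: sdiff_def p_def)
    show "0 \<le> sdiff p k"
    proof (cases "k = s - 1 \<or> k = s \<or> k = s + 1")
      case True
      then have "sdiff h k \<ge> \<delta>" unfolding \<delta>_def by auto
      moreover have "\<bar>e (k+1) - 2 * e k + e (k - 1)\<bar> \<le> 2 * \<bar>\<epsilon>\<bar>"
        using s True by (auto simp: e_def)
      ultimately show ?thesis using sd e_abs by linarith
    next
      case False
      then have "e (k+1) - 2 * e k + e (k - 1) = 0" using s k by (auto simp: e_def)
      then show ?thesis using sd hk by simp
    qed
  qed
  have se: "summable (\<lambda>j. (e j)\<^sup>2)"
  proof -
    have "(\<lambda>j. (e j)\<^sup>2) = (\<lambda>j. if j = s then \<epsilon>\<^sup>2 else 0)" by (auto simp: e_def)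
    then show ?thesis by simp
  qed
  have sp: "summable (\<lambda>j. (p j)\<^sup>2)"
    using summable_sq_diff[OF convexL2_sq[OF hC], of "\<lambda>j. - e j"] se by (simp add: p_def)
  have pC: "p \<in> convexL2" using conv sp by (simp add: convexL2_def)
  have s1: "summable (\<lambda>i. (q i - h i)\<^sup>2)" using summable_sq_diff[OF sq convexL2_sq[OF hC]] .
  have pt: "(\<lambda>j. (q j - p j)\<^sup>2) = (\<lambda>j. (q j - h j)\<^sup>2 + (if j = s then \<epsilon>\<^sup>2 - 2 * \<epsilon> * a else 0))"
    by (auto simp: p_def e_def a_def power2_eq_square algebra_simps)
  have "(\<lambda>j. (q j - p j)\<^sup>2) sums ((\<Sum>j. (q j - h j)\<^sup>2) + (\<epsilon>\<^sup>2 - 2 * \<epsilon> * a))"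
    unfolding pt by (intro sums_add summable_sums s1 sums_single[of s "\<lambda>_. \<epsilon>\<^sup>2 - 2 * \<epsilon> * a", simplified])
  then have "(\<Sum>j. (q j - p j)\<^sup>2) = (\<Sum>j. (q j - h j)\<^sup>2) + (\<epsilon>\<^sup>2 - 2 * \<epsilon> * a)"
    by (rule sums_unique[symmetric])
  with hmin[OF pC] have "0 \<le> \<epsilon>\<^sup>2 - 2 * \<epsilon> * a" unfolding ls_crit_def by simp
  also have "\<epsilon>\<^sup>2 - 2 * \<epsilon> * a = a\<^sup>2 * (t * (t - 2))"
    by (simp add: \<epsilon>_def power2_eq_square algebra_simps)
  also have "\<dots> < 0"
  proof -
    have "a\<^sup>2 > 0" using a0 by simp
    moreover have "t * (t - 2) < 0" using t0 by (simp add: mult_pos_neg)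
    ultimately show ?thesis by (simp add: mult_pos_neg)
  qed
  finally show False by simp
qed


lemma card_filter_sum: "real (card {i. i < (n::nat) \<and> P i}) = (\<Sum>i<n. if P i then 1 else 0)"
proof -
  have "(\<Sum>i<n. if P i then 1 else 0) = (\<Sum>i\<in>{i\<in>{..<n}. P i}. 1::real)"
    by (rule sum.inter_filter[symmetric]) simp
  moreover have "{i\<in>{..<n}. P i} = {i. i < n \<and> P i}" by auto
  ultimately show ?thesis by simp
qed

locale pmfsetup = prob_space M for M :: "'a measure" +
  fixes X :: "nat \<Rightarrow> 'a \<Rightarrow> nat" and p0 :: "nat \<Rightarrow> real"
  assumes Xm[measurable]: "\<And>i. X i \<in> measurable M (count_space UNIV)"
    and indep: "indep_vars (\<lambda>_. count_space UNIV) X UNIV"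
    and Xd: "\<And>i j. measure M {\<omega>\<in>space M. X i \<omega> = j} = p0 j"
    and p0nn: "\<And>j. p0 j \<ge> 0" and p0s: "p0 sums 1"
begin

lemma distX: "distr M (count_space UNIV) (X i) = distr M (count_space UNIV) (X 0)"
proof (rule measure_eqI_countable[where A=UNIV])
  fix a :: nat
  have "emeasure (distr M (count_space UNIV) (X k)) {a} = ennreal (p0 a)" for k
  proof -
    have "emeasure (distr M (count_space UNIV) (X k)) {a} = emeasure M (X k -` {a} \<inter> space M)"
      by (rule emeasure_distr) auto
    also have "X k -` {a} \<inter> space M = {\<omega>\<in>space M. X k \<omega> = a}" by auto
    also have "emeasure M \<dots> = ennreal (p0 a)" using Xd[of k a] by (simp add: emeasure_eq_measure)
    finally show ?thesis .
  qed
  then show "emeasure (distr M (count_space UNIV) (X i)) {a} = emeasure (distr M (count_space UNIV) (X 0)) {a}"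
    by simp
qed auto

lemma distf: "distr M borel (\<lambda>\<omega>. f (X i \<omega>) :: real) = distr M borel (\<lambda>\<omega>. f (X 0 \<omega>))"
proof -
  have "distr M borel (\<lambda>\<omega>. f (X k \<omega>)) = distr (distr M (count_space UNIV) (X k)) borel f" for k
    by (subst distr_distr) (auto simp: o_def)
  then show ?thesis using distX[of i] by simp
qed

lemma indepf: "indep_vars (\<lambda>_. borel) (\<lambda>i \<omega>. f (X i \<omega>) :: real) UNIV"
  by (rule indep_vars_compose2[OF indep]) auto

lemma expect_ind: "expectation (\<lambda>\<omega>. if X i \<omega> = j then 1 else 0 :: real) = p0 j"
proof -
  have "expectation (\<lambda>\<omega>. if X i \<omega> = j then 1 else 0 :: real) = expectation (indicator {\<omega>\<in>space M. X i \<omega> = j})"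
    by (rule Bochner_Integration.integral_cong) (auto simp: indicator_def)
  also have "\<dots> = p0 j" using Xd[of i j] by (simp add: Int_absorb2 subset_eq)
  finally show ?thesis .
qed

end


context pmfsetup begin

lemma hoeff_bound:
  assumes e: "\<epsilon> > 0" and n: "n \<ge> 1"
  shows "prob {\<omega>\<in>space M. real n * \<epsilon> \<le> \<bar>(\<Sum>i<n. (if X i \<omega> = j then 1 else 0 :: real)) - real n * p0 j\<bar>}
          \<le> 2 * exp (-2 * \<epsilon>\<^sup>2) ^ n"
proof -
  define Y where "Y i \<omega> = (if X i \<omega> = j then 1 else 0 :: real)" for i \<omega>
  interpret H: Hoeffding_ineq_iid M "{..<n}" Y "Y 0" 0 1 "expectation (Y 0)"
  proof unfold_locales
    show "indep_vars (\<lambda>_. borel) Y {..<n}"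
      using indep_vars_subset[OF indepf[of "\<lambda>k. if k = j then 1 else 0"]] unfolding Y_def by auto
    show "distr M borel (Y i) = distr M borel (Y 0)" if "i \<in> {..<n}" for i
      unfolding Y_def using distf[of "\<lambda>k. if k = j then 1 else 0" i] by simp
    show "random_variable borel (Y 0)" unfolding Y_def by simp
    show "AE x in M. Y 0 x \<in> {0..1}" unfolding Y_def by simp
  qed simp
  have mu: "expectation (Y 0) = p0 j" unfolding Y_def by (rule expect_ind)
  have "prob {x\<in>space M. real n * \<epsilon> \<le> \<bar>(\<Sum>i\<in>{..<n}. Y i x) - real (card {..<n}) * expectation (Y 0)\<bar>}
      \<le> 2 * exp (-2 * (real n * \<epsilon>)\<^sup>2 / (real (card {..<n}) * (1 - 0)\<^sup>2))"
    by (rule H.Hoeffding_ineq_abs_ge) (use e n in \<open>auto simp: lessThan_empty_iff\<close>)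
  also have "-2 * (real n * \<epsilon>)\<^sup>2 / (real (card {..<n}) * (1 - 0)\<^sup>2) = real n * (-2 * \<epsilon>\<^sup>2)"
    using n by (simp add: power2_eq_square)
  also have "exp (real n * (-2 * \<epsilon>\<^sup>2)) = exp (-2 * \<epsilon>\<^sup>2) ^ n" by (rule exp_of_nat_mult)
  finally show ?thesis using mu unfolding Y_def by simp
qed

lemma slln_eps:
  assumes e: "\<epsilon> > 0"
  shows "AE \<omega> in M. eventually (\<lambda>n. \<bar>emp_pmf X n \<omega> j - p0 j\<bar> < \<epsilon>) sequentially"
proof -
  define A where "A n = {\<omega>\<in>space M. real n * \<epsilon> \<le> \<bar>(\<Sum>i<n. (if X i \<omega> = j then 1 else 0 :: real)) - real n * p0 j\<bar>}" for n
  have Am: "A n \<in> sets M" for n unfolding A_def by measurable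
  have sm: "summable (\<lambda>n. measure M (A n))"
  proof (rule summable_comparison_test)
    show "\<exists>N. \<forall>n\<ge>N. norm (measure M (A n)) \<le> 2 * exp (-2 * \<epsilon>\<^sup>2) ^ n"
      using hoeff_bound[OF e] unfolding A_def by (intro exI[of _ 1]) auto
    show "summable (\<lambda>n. 2 * exp (-2 * \<epsilon>\<^sup>2) ^ n)"
      using e by (intro summable_mult summable_geometric) simp
  qed
  have "AE \<omega> in M. eventually (\<lambda>n. \<omega> \<in> space M - A n) sequentially"
    by (rule borel_cantelli_AE1[OF Am _ sm]) (simp add: emeasure_eq_measure)
  then show ?thesis
  proof (rule AE_mp, intro AE_I2 impI)
    fix \<omega> assume \<omega>: "\<omega> \<in> space M" and ev: "eventually (\<lambda>n. \<omega> \<in> space M - A n) sequentially"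
    have "eventually (\<lambda>n. n \<ge> 1) sequentially" by (rule eventually_ge_at_top)
    with ev show "eventually (\<lambda>n. \<bar>emp_pmf X n \<omega> j - p0 j\<bar> < \<epsilon>) sequentially"
    proof eventually_elim
      case (elim n)
      then have "\<bar>(\<Sum>i<n. (if X i \<omega> = j then 1 else 0 :: real)) - real n * p0 j\<bar> < real n * \<epsilon>"
        using \<omega> by (auto simp: A_def)
      moreover have "emp_pmf X n \<omega> j - p0 j = ((\<Sum>i<n. (if X i \<omega> = j then 1 else 0 :: real)) - real n * p0 j) / real n"
        using elim by (simp add: emp_pmf_def card_filter_sum field_simps)
      moreover have "real n > 0" using elim by simp
      ultimately have "\<bar>emp_pmf X n \<omega> j - p0 j\<bar> * real n < \<epsilon> * real n"
        by (simp add: abs_divide mult.commute)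
      then show ?case using \<open>real n > 0\<close> by simp
    qed
  qed
qed

lemma slln: "AE \<omega> in M. (\<lambda>n. emp_pmf X n \<omega> j) \<longlonglongrightarrow> p0 j"
proof -
  have "\<forall>m::nat. AE \<omega> in M. eventually (\<lambda>n. \<bar>emp_pmf X n \<omega> j - p0 j\<bar> < 1 / real (Suc m)) sequentially"
    by (intro allI slln_eps) simp
  then have "AE \<omega> in M. \<forall>m::nat. eventually (\<lambda>n. \<bar>emp_pmf X n \<omega> j - p0 j\<bar> < 1 / real (Suc m)) sequentially"
    by (simp add: AE_all_countable)
  then show ?thesis
  proof (rule AE_mp, intro AE_I2 impI)
    fix \<omega> assume h: "\<forall>m::nat. eventually (\<lambda>n. \<bar>emp_pmf X n \<omega> j - p0 j\<bar> < 1 / real (Suc m)) sequentially"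
    show "(\<lambda>n. emp_pmf X n \<omega> j) \<longlonglongrightarrow> p0 j"
    proof (rule tendstoI)
      fix e :: real assume "e > 0"
      then obtain m :: nat where m: "1 / real (Suc m) < e"
        by (metis nat_approx_posE)
      show "eventually (\<lambda>n. dist (emp_pmf X n \<omega> j) (p0 j) < e) sequentially"
        using h[rule_format, of m] by eventually_elim (use m in \<open>simp add: dist_real_def\<close>)
    qed
  qed
qed

end


lemma sq_le_sum01: "0 \<le> (a::real) \<Longrightarrow> a \<le> 1 \<Longrightarrow> 0 \<le> b \<Longrightarrow> b \<le> 1 \<Longrightarrow> (a - b)\<^sup>2 \<le> a + b"
proof -
  assume h: "0 \<le> a" "a \<le> 1" "0 \<le> b" "b \<le> 1"
  have "(a - b)\<^sup>2 = \<bar>a - b\<bar> * \<bar>a - b\<bar>" by (simp add: power2_eq_square abs_mult_self_eq)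
  also have "\<dots> \<le> 1 * \<bar>a - b\<bar>" using h by (intro mult_right_mono) auto
  also have "\<dots> \<le> a + b" using h by simp
  finally show ?thesis .
qed

lemma l2_conv:
  fixes q :: "nat \<Rightarrow> nat \<Rightarrow> real" and p0 :: "nat \<Rightarrow> real"
  assumes qs: "\<And>n. n \<ge> 1 \<Longrightarrow> q n sums 1" and qnn: "\<And>n j. q n j \<ge> 0"
    and pw: "\<And>j. (\<lambda>n. q n j) \<longlonglongrightarrow> p0 j"
    and p0nn: "\<And>j. p0 j \<ge> 0" and p0s: "p0 sums 1"
  shows "(\<lambda>n. \<Sum>j. (q n j - p0 j)\<^sup>2) \<longlonglongrightarrow> 0"
proof (rule tendstoI)
  fix \<epsilon> :: real assume e: "\<epsilon> > 0"
  have p0le: "p0 j \<le> 1" for j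
    using term_le_suminf[OF sums_summable[OF p0s] p0nn, of j] sums_unique[OF p0s] by simp
  have "(\<lambda>J. \<Sum>j<J. p0 j) \<longlonglongrightarrow> 1" using p0s by (simp add: sums_def)
  then have "eventually (\<lambda>J. 1 - \<epsilon> / 4 < (\<Sum>j<J. p0 j)) sequentially"
    using e by (intro order_tendstoD(1)) auto
  then obtain J where J: "1 - (\<Sum>j<J. p0 j) < \<epsilon> / 4"
    unfolding eventually_sequentially by (metis order_refl diff_less_eq add.commute)
  have c1: "(\<lambda>n. \<Sum>j<J. (q n j - p0 j)\<^sup>2) \<longlonglongrightarrow> (\<Sum>j<J. (p0 j - p0 j)\<^sup>2)"
    by (intro tendsto_intros pw)
  have c2: "(\<lambda>n. \<Sum>j<J. q n j) \<longlonglongrightarrow> (\<Sum>j<J. p0 j)" by (intro tendsto_intros pw)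
  have ev1: "eventually (\<lambda>n. (\<Sum>j<J. (q n j - p0 j)\<^sup>2) < \<epsilon> / 4) sequentially"
    using order_tendstoD(2)[OF c1, of "\<epsilon>/4"] e by simp
  have ev2: "eventually (\<lambda>n. (\<Sum>j<J. p0 j) - \<epsilon> / 4 < (\<Sum>j<J. q n j)) sequentially"
    using order_tendstoD(1)[OF c2, of "(\<Sum>j<J. p0 j) - \<epsilon> / 4"] e by simp
  show "eventually (\<lambda>n. dist (\<Sum>j. (q n j - p0 j)\<^sup>2) 0 < \<epsilon>) sequentially"
    using ev1 ev2 eventually_ge_at_top[of 1]
  proof eventually_elim
    case (elim n)
    have qsn: "q n sums 1" using qs elim(3) by simp
    have qle: "q n j \<le> 1" for j
      using term_le_suminf[OF sums_summable[OF qsn] qnn, of j] sums_unique[OF qsn] by simp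
    define f where "f j = (q n j - p0 j)\<^sup>2" for j
    have fle: "f j \<le> q n j + p0 j" for j
      unfolding f_def by (rule sq_le_sum01) (auto simp: qnn qle p0nn p0le)
    have sqp: "summable (\<lambda>j. q n j + p0 j)"
      by (intro summable_add sums_summable[OF qsn] sums_summable[OF p0s])
    have sf: "summable f"
      by (rule summable_comparison_test[OF _ sqp]) (auto simp: f_def fle[unfolded f_def])
    have "(\<Sum>j. f j) = (\<Sum>i. f (i + J)) + (\<Sum>j<J. f j)"
      by (rule suminf_split_initial_segment[OF sf])
    also have "(\<Sum>i. f (i + J)) \<le> (\<Sum>i. q n (i + J) + p0 (i + J))"
      by (rule suminf_le) (auto intro: fle summable_ignore_initial_segment sf sqp)
    also have "\<dots> = (\<Sum>i. q n (i + J)) + (\<Sum>i. p0 (i + J))"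
      by (rule suminf_add[symmetric]) (auto intro: summable_ignore_initial_segment sums_summable[OF qsn] sums_summable[OF p0s])
    also have "(\<Sum>i. q n (i + J)) = 1 - (\<Sum>j<J. q n j)"
      using suminf_split_initial_segment[OF sums_summable[OF qsn], of J] sums_unique[OF qsn] by simp
    also have "(\<Sum>i. p0 (i + J)) = 1 - (\<Sum>j<J. p0 j)"
      using suminf_split_initial_segment[OF sums_summable[OF p0s], of J] sums_unique[OF p0s] by simp
    finally have "(\<Sum>j. f j) < \<epsilon>" using elim(1,2) J unfolding f_def by simp
    moreover have "(\<Sum>j. f j) \<ge> 0" by (rule suminf_nonneg[OF sf]) (simp add: f_def)
    ultimately show ?case unfolding f_def by (simp add: dist_real_def)
  qed
qed


lemma eventually_fix:
  fixes q :: "nat \<Rightarrow> nat \<Rightarrow> real"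
  assumes sq: "\<And>n. summable (\<lambda>j. (q n j)\<^sup>2)" and p0C: "p0 \<in> convexL2"
    and s: "s \<ge> 2" and k1: "knot p0 (s - 1)" and k2: "knot p0 s" and k3: "knot p0 (s + 1)"
    and D: "(\<lambda>n. \<Sum>j. (q n j - p0 j)\<^sup>2) \<longlonglongrightarrow> 0"
  shows "\<exists>n0. \<forall>n\<ge>n0. ls_convex (q n) s = q n s"
proof -
  have conv: "(\<lambda>n. ls_convex (q n) j) \<longlonglongrightarrow> p0 j" for j
  proof -
    have "(\<lambda>n. ls_convex (q n) j - p0 j) \<longlonglongrightarrow> 0"
    proof (rule Lim_null_comparison)
      show "eventually (\<lambda>n. norm (ls_convex (q n) j - p0 j) \<le> sqrt (4 * (\<Sum>i. (q n i - p0 i)\<^sup>2))) sequentially"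
      proof (rule always_eventually, rule allI)
        fix n
        have "sqrt ((ls_convex (q n) j - p0 j)\<^sup>2) \<le> sqrt (4 * (\<Sum>i. (q n i - p0 i)\<^sup>2))"
          by (rule real_sqrt_le_mono[OF ls_close[OF sq p0C]])
        then show "norm (ls_convex (q n) j - p0 j) \<le> sqrt (4 * (\<Sum>i. (q n i - p0 i)\<^sup>2))" by simp
      qed
      have "(\<lambda>n. sqrt (4 * (\<Sum>i. (q n i - p0 i)\<^sup>2))) \<longlonglongrightarrow> sqrt (4 * 0)"
        by (intro tendsto_intros D)
      then show "(\<lambda>n. sqrt (4 * (\<Sum>i. (q n i - p0 i)\<^sup>2))) \<longlonglongrightarrow> 0" by simp
    qed
    then have "(\<lambda>n. (ls_convex (q n) j - p0 j) + p0 j) \<longlonglongrightarrow> 0 + p0 j" by (intro tendsto_intros)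
    then show ?thesis by simp
  qed
  have sdc: "(\<lambda>n. sdiff (ls_convex (q n)) k) \<longlonglongrightarrow> sdiff p0 k" for k
    unfolding sdiff_def by (intro tendsto_intros conv)
  have ev: "eventually (\<lambda>n. sdiff (ls_convex (q n)) k > 0) sequentially" if "knot p0 k" for k
    using order_tendstoD(1)[OF sdc[of k], of 0] that by (simp add: knot_def)
  have "eventually (\<lambda>n. ls_convex (q n) s = q n s) sequentially"
    using ev[OF k1] ev[OF k2] ev[OF k3]
    by eventually_elim (rule ls_knot_fix[OF sq s])
  then show ?thesis unfolding eventually_sequentially .
qed


lemma emp_zero: "j \<notin> (\<lambda>i. X i \<omega>) ` {..<n} \<Longrightarrow> emp_pmf X n \<omega> j = 0"
  by (auto simp: emp_pmf_def)

lemma emp_nonneg: "emp_pmf X n \<omega> j \<ge> 0"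
  by (simp add: emp_pmf_def)

lemma emp_sums:
  assumes n: "n \<ge> 1"
  shows "emp_pmf X n \<omega> sums 1"
proof -
  define K where "K = (\<lambda>i. X i \<omega>) ` {..<n}"
  have fK: "finite K" by (simp add: K_def)
  have "emp_pmf X n \<omega> sums (\<Sum>j\<in>K. emp_pmf X n \<omega> j)"
    by (rule sums_finite[OF fK]) (simp add: emp_zero K_def)
  also have "(\<Sum>j\<in>K. emp_pmf X n \<omega> j) = (\<Sum>j\<in>K. \<Sum>i<n. if X i \<omega> = j then 1 else 0) / real n"
    by (simp add: emp_pmf_def card_filter_sum sum_divide_distrib)
  also have "(\<Sum>j\<in>K. \<Sum>i<n. if X i \<omega> = j then 1 else (0::real)) = (\<Sum>i<n. \<Sum>j\<in>K. if X i \<omega> = j then 1 else 0)"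
    by (rule sum.swap)
  also have "\<dots> = (\<Sum>i<n. 1)"
  proof (rule sum.cong[OF refl])
    fix i assume "i \<in> {..<n}"
    then have "X i \<omega> \<in> K" by (simp add: K_def)
    then show "(\<Sum>j\<in>K. if X i \<omega> = j then 1 else (0::real)) = 1"
      using fK by (simp add: sum.delta)
  qed
  finally show ?thesis using n by simp
qed

lemma emp_sq: "summable (\<lambda>j. (emp_pmf X n \<omega> j)\<^sup>2)"
proof -
  have "finite ((\<lambda>i. X i \<omega>) ` {..<n})" by simp
  then show ?thesis by (rule summable_finite) (simp add: emp_zero)
qed

context pmfsetup begin

lemma p0_conv: "convex_seq p0 \<Longrightarrow> p0 \<in> convexL2"
proof -
  assume c: "convex_seq p0"
  have le1: "p0 j \<le> 1" for j
    using term_le_suminf[OF sums_summable[OF p0s] p0nn, of j] sums_unique[OF p0s] by simp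
  have "summable (\<lambda>j. (p0 j)\<^sup>2)"
  proof (rule summable_comparison_test[OF _ sums_summable[OF p0s]])
    show "\<exists>N. \<forall>n\<ge>N. norm ((p0 n)\<^sup>2) \<le> p0 n"
      using le1 p0nn by (auto simp: power2_eq_square intro!: mult_left_le exI[of _ 0])
  qed
  then show ?thesis using c by (simp add: convexL2_def)
qed

lemma part1:
  assumes c: "convex_seq p0" and s: "s \<ge> 2"
    and k1: "knot p0 (s - 1)" and k2: "knot p0 s" and k3: "knot p0 (s + 1)"
  shows "AE \<omega> in M. \<exists>n0. \<forall>n\<ge>n0. ls_convex (emp_pmf X n \<omega>) s = emp_pmf X n \<omega> s"
proof -
  have "AE \<omega> in M. \<forall>j. (\<lambda>n. emp_pmf X n \<omega> j) \<longlonglongrightarrow> p0 j"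
    using slln by (simp add: AE_all_countable)
  then show ?thesis
  proof (rule AE_mp, intro AE_I2 impI)
    fix \<omega> assume pw: "\<forall>j. (\<lambda>n. emp_pmf X n \<omega> j) \<longlonglongrightarrow> p0 j"
    have D: "(\<lambda>n. \<Sum>j. (emp_pmf X n \<omega> j - p0 j)\<^sup>2) \<longlonglongrightarrow> 0"
      by (rule l2_conv[OF emp_sums emp_nonneg _ p0nn p0s]) (use pw in auto)
    show "\<exists>n0. \<forall>n\<ge>n0. ls_convex (emp_pmf X n \<omega>) s = emp_pmf X n \<omega> s"
      by (rule eventually_fix[OF emp_sq p0_conv[OF c] s k1 k2 k3 D])
  qed
qed

end


lemma cdf_normal_scale:
  assumes \<sigma>: "\<sigma> > 0"
  shows "cdf (density lborel (normal_density 0 \<sigma>)) x = cdf std_normal_distribution (x / \<sigma>)"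
proof -
  define N where "N = std_normal_distribution"
  interpret N: prob_space N unfolding N_def using real_dist_normal_dist real_distribution_def by blast
  have d: "distributed N lborel (\<lambda>x. x) std_normal_density"
    unfolding distributed_def N_def
  proof (intro conjI)
    show "distr (density lborel std_normal_density) lborel (\<lambda>x. x) = density lborel std_normal_density"
      by (rule distr_id2) simp
  qed auto
  have "distributed N lborel (\<lambda>x. 0 + \<sigma> * x) (normal_density (0 + \<sigma> * 0) (\<bar>\<sigma>\<bar> * 1))"
    by (rule N.normal_density_affine[OF d]) (use \<sigma> in auto)
  then have dd: "distr N lborel (\<lambda>x. \<sigma> * x) = density lborel (normal_density 0 \<sigma>)"
    using \<sigma> by (simp add: distributed_def)
  have "cdf (density lborel (normal_density 0 \<sigma>)) x = measure (distr N lborel (\<lambda>x. \<sigma> * x)) {..x}"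
    by (simp add: dd cdf_def)
  also have "\<dots> = measure N ((\<lambda>x. \<sigma> * x) -` {..x} \<inter> space N)"
    by (rule measure_distr) (auto simp: N_def)
  also have "(\<lambda>x. \<sigma> * x) -` {..x} \<inter> space N = {..x / \<sigma>}"
    using \<sigma> by (auto simp: N_def field_simps)
  finally show ?thesis by (simp add: cdf_def N_def)
qed


lemma (in prob_space) prob_E_to_0:
  assumes Em: "\<And>n. E n \<in> sets M" and ae: "AE \<omega> in M. \<exists>n0. \<forall>n\<ge>n0. \<omega> \<notin> E n"
  shows "(\<lambda>n. prob (E n)) \<longlonglongrightarrow> 0"
proof -
  have "(\<lambda>n. integral\<^sup>L M (indicator (E n) :: 'a \<Rightarrow> real)) \<longlonglongrightarrow> integral\<^sup>L M (\<lambda>_. 0 :: real)"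
  proof (rule integral_dominated_convergence[where w="\<lambda>_. 1"])
    show "AE x in M. (\<lambda>i. indicator (E i) x :: real) \<longlonglongrightarrow> 0"
      using ae
    proof (rule AE_mp, intro AE_I2 impI)
      fix x assume "\<exists>n0. \<forall>n\<ge>n0. x \<notin> E n"
      then have "eventually (\<lambda>i. indicator (E i) x = (0::real)) sequentially"
        unfolding eventually_sequentially by (metis indicator_simps(2))
      then show "(\<lambda>i. indicator (E i) x :: real) \<longlonglongrightarrow> 0" by (rule tendsto_eventually)
    qed
  qed (auto simp: Em intro!: borel_measurable_indicator)
  then show ?thesis using Em by (simp add: Int_absorb2 sets.sets_into_space)
qed

lemma (in prob_space) weak_conv_transfer:
  fixes Z W :: "nat \<Rightarrow> 'a \<Rightarrow> real"
  assumes Zm[measurable]: "\<And>n. Z n \<in> borel_measurable M" and Wm[measurable]: "\<And>n. W n \<in> borel_measurable M"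
    and conv: "weak_conv_m (\<lambda>n. distr M borel (Z n)) std_normal_distribution"
    and \<sigma>: "\<sigma> > 0"
    and ae: "AE \<omega> in M. \<exists>n0. \<forall>n\<ge>n0. W n \<omega> = \<sigma> * Z n \<omega>"
  shows "weak_conv_m (\<lambda>n. distr M borel (W n)) (density lborel (normal_density 0 \<sigma>))"
  unfolding weak_conv_m_def weak_conv_def
proof (intro allI impI)
  fix x assume cont: "isCont (cdf (density lborel (normal_density 0 \<sigma>))) x"
  define E where "E n = {\<omega>\<in>space M. W n \<omega> \<noteq> \<sigma> * Z n \<omega>}" for n
  have Em: "E n \<in> sets M" for n unfolding E_def by measurable
  have pE: "(\<lambda>n. prob (E n)) \<longlonglongrightarrow> 0"
    by (rule prob_E_to_0[OF Em]) (use ae in \<open>auto simp: E_def\<close>)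
  have cW: "cdf (distr M borel (W n)) x = prob {\<omega>\<in>space M. W n \<omega> \<le> x}" for n
  proof -
    have "cdf (distr M borel (W n)) x = measure M (W n -` {..x} \<inter> space M)"
      unfolding cdf_def by (rule measure_distr) auto
    also have "W n -` {..x} \<inter> space M = {\<omega>\<in>space M. W n \<omega> \<le> x}" by auto
    finally show ?thesis .
  qed
  have cZ: "cdf (distr M borel (Z n)) (x / \<sigma>) = prob {\<omega>\<in>space M. \<sigma> * Z n \<omega> \<le> x}" for n
  proof -
    have "cdf (distr M borel (Z n)) (x / \<sigma>) = measure M (Z n -` {..x / \<sigma>} \<inter> space M)"
      unfolding cdf_def by (rule measure_distr) auto
    also have "Z n -` {..x / \<sigma>} \<inter> space M = {\<omega>\<in>space M. \<sigma> * Z n \<omega> \<le> x}"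
      using \<sigma> by (auto simp: field_simps)
    finally show ?thesis .
  qed
  have scale: "cdf (density lborel (normal_density 0 \<sigma>)) y = cdf std_normal_distribution (y / \<sigma>)" for y
    by (rule cdf_normal_scale[OF \<sigma>])
  have "isCont (cdf std_normal_distribution) (x / \<sigma>)"
  proof -
    have "isCont (\<lambda>y. cdf (density lborel (normal_density 0 \<sigma>)) (\<sigma> * y)) (x / \<sigma>)"
    proof (rule isCont_o2[where f="\<lambda>y. \<sigma> * y" and g="cdf (density lborel (normal_density 0 \<sigma>))"])
      show "isCont (\<lambda>y. \<sigma> * y) (x / \<sigma>)" by (intro continuous_intros)
      show "isCont (cdf (density lborel (normal_density 0 \<sigma>))) (\<sigma> * (x / \<sigma>))"
        using \<sigma> cont by simp
    qed
    moreover have "(\<lambda>y. cdf (density lborel (normal_density 0 \<sigma>)) (\<sigma> * y)) = cdf std_normal_distribution"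
      using \<sigma> by (simp add: scale)
    ultimately show ?thesis by simp
  qed
  then have "(\<lambda>n. cdf (distr M borel (Z n)) (x / \<sigma>)) \<longlonglongrightarrow> cdf std_normal_distribution (x / \<sigma>)"
    using conv unfolding weak_conv_m_def weak_conv_def by blast
  then have cz: "(\<lambda>n. prob {\<omega>\<in>space M. \<sigma> * Z n \<omega> \<le> x}) \<longlonglongrightarrow> cdf std_normal_distribution (x / \<sigma>)"
    by (simp only: cZ)
  have bound: "\<bar>prob {\<omega>\<in>space M. W n \<omega> \<le> x} - prob {\<omega>\<in>space M. \<sigma> * Z n \<omega> \<le> x}\<bar> \<le> prob (E n)" for n
  proof -
    have "prob {\<omega>\<in>space M. W n \<omega> \<le> x} \<le> prob ({\<omega>\<in>space M. \<sigma> * Z n \<omega> \<le> x} \<union> E n)"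
      by (rule finite_measure_mono) (auto simp: E_def Em)
    also have "\<dots> \<le> prob {\<omega>\<in>space M. \<sigma> * Z n \<omega> \<le> x} + prob (E n)"
      by (rule measure_Un_le) (auto simp: Em)
    finally have 1: "prob {\<omega>\<in>space M. W n \<omega> \<le> x} \<le> prob {\<omega>\<in>space M. \<sigma> * Z n \<omega> \<le> x} + prob (E n)" .
    have "prob {\<omega>\<in>space M. \<sigma> * Z n \<omega> \<le> x} \<le> prob ({\<omega>\<in>space M. W n \<omega> \<le> x} \<union> E n)"
      by (rule finite_measure_mono) (auto simp: E_def Em)
    also have "\<dots> \<le> prob {\<omega>\<in>space M. W n \<omega> \<le> x} + prob (E n)"
      by (rule measure_Un_le) (auto simp: Em)
    finally have 2: "prob {\<omega>\<in>space M. \<sigma> * Z n \<omega> \<le> x} \<le> prob {\<omega>\<in>space M. W n \<omega> \<le> x} + prob (E n)" .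
    from 1 2 show ?thesis by linarith
  qed
  have "(\<lambda>n. prob {\<omega>\<in>space M. W n \<omega> \<le> x} - prob {\<omega>\<in>space M. \<sigma> * Z n \<omega> \<le> x}) \<longlonglongrightarrow> 0"
    by (rule Lim_null_comparison[OF always_eventually pE]) (use bound in auto)
  from tendsto_add[OF this cz]
  show "(\<lambda>n. cdf (distr M borel (W n)) x) \<longlonglongrightarrow> cdf (density lborel (normal_density 0 \<sigma>)) x"
    by (simp add: cW scale)
qed


context pmfsetup begin

lemma map_upt_eq: "map f [0..<n] = l \<longleftrightarrow> (length l = n \<and> (\<forall>i<n. f i = l ! i))"
proof
  assume "map f [0..<n] = l" then show "length l = n \<and> (\<forall>i<n. f i = l ! i)" by auto
next
  assume h: "length l = n \<and> (\<forall>i<n. f i = l ! i)"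
  show "map f [0..<n] = l" by (rule nth_equalityI) (use h in auto)
qed

lemma Vm: "(\<lambda>\<omega>. map (\<lambda>i. X i \<omega>) [0..<n]) \<in> measurable M (count_space UNIV)"
proof (rule measurable_count_space_eq_countable[THEN iffD2, OF countableI_type], intro conjI ballI)
  show "(\<lambda>\<omega>. map (\<lambda>i. X i \<omega>) [0..<n]) \<in> space M \<rightarrow> UNIV" by simp
  fix l :: "nat list"
  have "(\<lambda>\<omega>. map (\<lambda>i. X i \<omega>) [0..<n]) -` {l} \<inter> space M =
        {\<omega>\<in>space M. length l = n \<and> (\<forall>i<n. X i \<omega> = l ! i)}"
    by (auto simp: map_upt_eq)
  also have "\<dots> = {\<omega>\<in>space M. length l = n} \<inter> {\<omega>\<in>space M. \<forall>i\<in>{..<n}. X i \<omega> = l ! i}"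
    by auto
  also have "\<dots> \<in> sets M"
  proof (intro sets.Int sets.sets_Collect_finite_All)
    show "{\<omega> \<in> space M. length l = n} \<in> sets M" by (cases "length l = n") auto
    fix i show "{\<omega> \<in> space M. X i \<omega> = l ! i} \<in> sets M" by measurable
  qed simp
  finally show "(\<lambda>\<omega>. map (\<lambda>i. X i \<omega>) [0..<n]) -` {l} \<inter> space M \<in> sets M" .
qed

definition G :: "nat \<Rightarrow> nat list \<Rightarrow> nat \<Rightarrow> real" where
  "G n l j = real (card {i. i < n \<and> l ! i = j}) / real n"

lemma emp_G: "emp_pmf X n \<omega> = G n (map (\<lambda>i. X i \<omega>) [0..<n])"
proof
  fix j
  have "{i. i < n \<and> map (\<lambda>i. X i \<omega>) [0..<n] ! i = j} = {i. i < n \<and> X i \<omega> = j}" by auto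
  then show "emp_pmf X n \<omega> j = G n (map (\<lambda>i. X i \<omega>) [0..<n]) j"
    by (simp add: emp_pmf_def G_def)
qed

lemma Wm: "(\<lambda>\<omega>. h (emp_pmf X n \<omega>) :: real) \<in> borel_measurable M"
proof -
  have "(\<lambda>\<omega>. h (emp_pmf X n \<omega>)) = (\<lambda>l. h (G n l)) \<circ> (\<lambda>\<omega>. map (\<lambda>i. X i \<omega>) [0..<n])"
    by (simp add: o_def emp_G)
  also have "\<dots> \<in> borel_measurable M"
    by (rule measurable_comp[OF Vm]) simp
  finally show ?thesis .
qed

lemma p0_pos:
  assumes c: "convex_seq p0" and k: "knot p0 (s + 1)"
  shows "0 < p0 s"
proof (rule ccontr)
  assume "\<not> 0 < p0 s"
  then have z: "p0 s = 0" using p0nn[of s] by simp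
  have C: "p0 \<in> convexL2" by (rule p0_conv[OF c])
  have "p0 (Suc s) \<le> p0 s" "p0 (Suc (Suc s)) \<le> p0 (Suc s)" using convexL2_decr[OF C] by auto
  then have "p0 (Suc s) = 0" "p0 (Suc (Suc s)) = 0" using z p0nn by (auto intro: antisym)
  then have "sdiff p0 (s + 1) = 0" using z by (simp add: sdiff_def)
  with k show False by (simp add: knot_def)
qed

lemma p0_lt1:
  assumes c: "convex_seq p0" and s: "s \<ge> 1" and pos: "0 < p0 s"
  shows "p0 s < 1"
proof -
  have C: "p0 \<in> convexL2" by (rule p0_conv[OF c])
  have "p0 s \<le> p0 0" by (rule convexL2_le0[OF C])
  have "sum p0 {0, s} \<le> suminf p0" by (rule sum_le_suminf[OF sums_summable[OF p0s]]) (auto simp: p0nn)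
  then have "p0 0 + p0 s \<le> 1" using s sums_unique[OF p0s] by simp
  with \<open>p0 s \<le> p0 0\<close> pos show ?thesis by linarith
qed

lemma clt:
  assumes m0: "0 < p0 s" and m1: "p0 s < 1"
  shows "weak_conv_m (\<lambda>n. distr M borel (\<lambda>x. (\<Sum>i<n. (if X i x = s then 1 else 0) - p0 s) / sqrt (real n * (sqrt (p0 s * (1 - p0 s)))\<^sup>2))) std_normal_distribution"
proof -
  define Y where "Y i x = (if X i x = s then 1 else 0 :: real)" for i x
  define \<sigma> where "\<sigma> = sqrt (p0 s * (1 - p0 s))"
  have s2: "\<sigma>\<^sup>2 = p0 s * (1 - p0 s)" unfolding \<sigma>_def using m0 m1 by simp
  have Ym[measurable]: "Y n \<in> borel_measurable M" for n unfolding Y_def by measurable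
  have Yint: "integrable M (Y n)" for n
    by (rule integrable_const_bound[where B=1]) (auto simp: Y_def)
  have EY: "expectation (Y n) = p0 s" for n unfolding Y_def by (rule expect_ind)
  have "weak_conv_m (\<lambda>n. distr M borel (\<lambda>x. (\<Sum>i<n. Y i x - p0 s) / sqrt (real n * \<sigma>\<^sup>2))) std_normal_distribution"
  proof (rule central_limit_theorem[where \<mu>="distr M borel (Y 0)"])
    show "indep_vars (\<lambda>i. borel) Y UNIV" unfolding Y_def by (rule indepf)
    show "expectation (Y n) = p0 s" for n by (rule EY)
    show "\<sigma> > 0" unfolding \<sigma>_def using m0 m1 by simp
    show "integrable M (\<lambda>x. (Y n x)\<^sup>2)" for n
      by (rule integrable_const_bound[where B=1]) (auto simp: Y_def)
    show "distr M borel (Y n) = distr M borel (Y 0)" for n unfolding Y_def by (rule distf)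
    show "variance (Y n) = \<sigma>\<^sup>2" for n
    proof -
      have "variance (Y n) = expectation (\<lambda>x. (1 - 2 * p0 s) * Y n x + (p0 s)\<^sup>2)"
        unfolding EY by (rule Bochner_Integration.integral_cong) (auto simp: Y_def power2_eq_square algebra_simps)
      also have "\<dots> = (1 - 2 * p0 s) * expectation (Y n) + (p0 s)\<^sup>2"
        using Yint by (simp add: prob_space)
      also have "\<dots> = \<sigma>\<^sup>2" unfolding EY s2 by (simp add: power2_eq_square algebra_simps)
      finally show ?thesis .
    qed
  qed
  then show ?thesis unfolding Y_def \<sigma>_def .
qed

end

lemma alg_id:
  assumes n: "n \<ge> 1" and \<sigma>: "\<sigma> > 0"
  shows "sqrt (real n) * (S / real n - m) = \<sigma> * ((S - real n * m) / sqrt (real n * \<sigma>\<^sup>2))"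
proof -
  have sn: "sqrt (real n) > 0" using n by simp
  have e1: "sqrt (real n * \<sigma>\<^sup>2) = sqrt (real n) * \<sigma>" using \<sigma> by (simp add: real_sqrt_mult)
  have e2: "real n = sqrt (real n) * sqrt (real n)" by simp
  show ?thesis unfolding e1 using sn \<sigma>
    by (subst (1 2) e2) (simp add: field_simps)
qed


theorem mainTheorem11:
  fixes M :: "'a measure" and X :: "nat \<Rightarrow> 'a \<Rightarrow> nat"
    and p0 :: "nat \<Rightarrow> real" and s :: nat
  assumes "prob_space M"
    and "\<And>i. X i \<in> measurable M (count_space UNIV)"
    and "prob_space.indep_vars M (\<lambda>_. count_space UNIV) X UNIV"
    and "\<And>i j. measure M {\<omega> \<in> space M. X i \<omega> = j} = p0 j"
    and "\<And>j. p0 j \<ge> 0"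
    and "p0 sums 1"
    and "convex_seq p0"
    and "(\<forall>j. p0 j > 0) \<or> (\<exists>S::nat. S \<ge> 1 \<and> (\<forall>j. p0 j > 0 \<longleftrightarrow> j \<le> S))"
    and "s \<ge> 2"
    and "knot p0 (s - 1)" and "knot p0 s" and "knot p0 (s + 1)"
  shows "(AE \<omega> in M. \<exists>n0. \<forall>n\<ge>n0.
            ls_convex (emp_pmf X n \<omega>) s = emp_pmf X n \<omega> s)
       \<and> weak_conv_m
           (\<lambda>n. distr M borel
                  (\<lambda>\<omega>. sqrt (real n) * (ls_convex (emp_pmf X n \<omega>) s - p0 s)))
           (density lborel (normal_density 0 (sqrt (p0 s * (1 - p0 s)))))"
proof -
  interpret pmfsetup M X p0
    by (rule pmfsetup.intro[OF assms(1)], unfold_locales) (use assms in auto)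
  have A1: "AE \<omega> in M. \<exists>n0. \<forall>n\<ge>n0. ls_convex (emp_pmf X n \<omega>) s = emp_pmf X n \<omega> s"
    by (rule part1) (use assms in auto)
  have m0: "0 < p0 s" by (rule p0_pos) (use assms in auto)
  have m1: "p0 s < 1" by (rule p0_lt1) (use assms m0 in auto)
  define \<sigma> where "\<sigma> = sqrt (p0 s * (1 - p0 s))"
  have \<sigma>: "\<sigma> > 0" unfolding \<sigma>_def using m0 m1 by simp
  define Z where "Z n x = (\<Sum>i<n. (if X i x = s then 1 else 0) - p0 s) / sqrt (real n * \<sigma>\<^sup>2)" for n x
  define W where "W n \<omega> = sqrt (real n) * (ls_convex (emp_pmf X n \<omega>) s - p0 s)" for n \<omega>
  have Zm: "Z n \<in> borel_measurable M" for n unfolding Z_def by measurable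
  have Wm': "W n \<in> borel_measurable M" for n
    unfolding W_def by (rule Wm[of "\<lambda>q. sqrt (real n) * (ls_convex q s - p0 s)"])
  have conv: "weak_conv_m (\<lambda>n. distr M borel (Z n)) std_normal_distribution"
    using clt[OF m0 m1] unfolding Z_def \<sigma>_def .
  have ae: "AE \<omega> in M. \<exists>n0. \<forall>n\<ge>n0. W n \<omega> = \<sigma> * Z n \<omega>"
    using A1
  proof (rule AE_mp, intro AE_I2 impI)
    fix \<omega> assume "\<exists>n0. \<forall>n\<ge>n0. ls_convex (emp_pmf X n \<omega>) s = emp_pmf X n \<omega> s"
    then obtain n0 where n0: "\<And>n. n \<ge> n0 \<Longrightarrow> ls_convex (emp_pmf X n \<omega>) s = emp_pmf X n \<omega> s" by blast
    show "\<exists>n0. \<forall>n\<ge>n0. W n \<omega> = \<sigma> * Z n \<omega>"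
    proof (intro exI[of _ "max n0 1"] allI impI)
      fix n assume n: "max n0 1 \<le> n"
      define S where "S = (\<Sum>i<n. if X i \<omega> = s then 1 else (0::real))"
      have "W n \<omega> = sqrt (real n) * (S / real n - p0 s)"
        unfolding W_def using n0[of n] n by (simp add: emp_pmf_def card_filter_sum S_def)
      also have "\<dots> = \<sigma> * ((S - real n * p0 s) / sqrt (real n * \<sigma>\<^sup>2))"
        by (rule alg_id) (use n \<sigma> in auto)
      also have "S - real n * p0 s = (\<Sum>i<n. (if X i \<omega> = s then 1 else 0) - p0 s)"
        by (simp add: S_def sum_subtractf)
      finally show "W n \<omega> = \<sigma> * Z n \<omega>" unfolding Z_def .
    qed
  qed
  have "weak_conv_m (\<lambda>n. distr M borel (W n)) (density lborel (normal_density 0 \<sigma>))"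
    by (rule weak_conv_transfer[OF Zm Wm' conv \<sigma> ae])
  then show ?thesis using A1 unfolding W_def \<sigma>_def by simp
qed


end
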